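(* Let $\lambda\in(1/2,1)$ and set $\rho=\lambda\Phi_1+(1-\lambda)|01\rangle\langle01|$ and $\sigma=\lambda\Phi_1+(1-\lambda)\Phi_2$. Then there exists no non-entangling map $\Lambda:\mathcal{D}\to\mathcal{D}$ such that $\Lambda(\rho)=\sigma$.
   Context: $\mathcal{D}$ is the set of two-qubit density matrices on $\mathbb{C}^2\otimes\mathbb{C}^2$ (Hermitian, positive semidefinite, trace one $4\times4$ matrices), written in the computational basis $\{|ij\rangle\}_{i,j\in\{0,1\}}$. The Bell vectors are $|\Phi_1\rangle=\frac{1}{\sqrt2}(|00\rangle+|11\rangle)$, $|\Phi_2\rangle=\frac{1}{\sqrt2}(|00\rangle-|11\rangle)$, and $\Phi_i=|\Phi_i\rangle\langle\Phi_i|$. (These are the states $\rho_{\vec\lambda}=\lambda_1\Phi_1+\lambda_2|01\rangle\langle01|+\lambda_3\Phi_2+\lambda_4|10\rangle\langle10|$ and $\sigma_{\vec\lambda}=\sum_j\lambda_j\Phi_j$, with $|\Phi_3\rangle=\frac{1}{\sqrt2}(|10\rangle+|01\rangle)$, $|\Phi_4\rangle=\frac{1}{\sqrt2}(|10\rangle-|01\rangle)$, for $\vec\lambda=(\lambda,1-\lambda,0,0)$.) A state is separable if it is a convex combination of product states $|\phi\rangle\langle\phi|\otimes|\chi\rangle\langle\chi|$. A map $\Lambda:\mathcal{D}\to\mathcal{D}$ is non-entangling (NE) if it is completely positive and trace preserving and maps every separable state to a separable state. *)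

theory Defs
  imports "Jordan_Normal_Form.Matrix"
begin

text \<open>Two-qubit states are 4x4 complex matrices in the computational basis
  |00>,|01>,|10>,|11>, where |ij> has index 2*i+j.\<close>

definition mtrace :: "complex mat \<Rightarrow> complex" where
  "mtrace A = (\<Sum>i<dim_row A. A $$ (i,i))"

definition psd :: "nat \<Rightarrow> complex mat \<Rightarrow> bool" where
  "psd n A \<longleftrightarrow> A \<in> carrier_mat n n
     \<and> (\<forall>i<n. \<forall>j<n. A $$ (i,j) = cnj (A $$ (j,i)))
     \<and> (\<forall>v \<in> carrier_vec n. 0 \<le> Re (\<Sum>i<n. \<Sum>j<n. cnj (v $ i) * A $$ (i,j) * v $ j))"

definition density4 :: "complex mat \<Rightarrow> bool" where
  "density4 A \<longleftrightarrow> psd 4 A \<and> mtrace A = 1"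

definition outer :: "nat \<Rightarrow> complex vec \<Rightarrow> complex mat" where
  "outer n v = mat n n (\<lambda>(i,j). v $ i * cnj (v $ j))"

definition unit_vec2 :: "complex vec \<Rightarrow> bool" where
  "unit_vec2 v \<longleftrightarrow> v \<in> carrier_vec 2 \<and> (\<Sum>i<2. (cmod (v $ i))^2) = 1"

definition kron22 :: "complex mat \<Rightarrow> complex mat \<Rightarrow> complex mat" where
  "kron22 A B = mat 4 4 (\<lambda>(r,c). A $$ (r div 2, c div 2) * B $$ (r mod 2, c mod 2))"

definition separable :: "complex mat \<Rightarrow> bool" where
  "separable \<rho> \<longleftrightarrow> (\<exists>(n::nat) (p::nat \<Rightarrow> real) \<phi> \<chi>.
      (\<forall>i<n. 0 \<le> p i) \<and> (\<Sum>i<n. p i) = 1 \<and>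
      (\<forall>i<n. unit_vec2 (\<phi> i) \<and> unit_vec2 (\<chi> i)) \<and>
      \<rho> = mat 4 4 (\<lambda>(r,c). \<Sum>i<n. complex_of_real (p i) *
              kron22 (outer 2 (\<phi> i)) (outer 2 (\<chi> i)) $$ (r,c)))"

definition linear_map4 :: "(complex mat \<Rightarrow> complex mat) \<Rightarrow> bool" where
  "linear_map4 \<Lambda> \<longleftrightarrow>
     (\<forall>A \<in> carrier_mat 4 4. \<Lambda> A \<in> carrier_mat 4 4) \<and>
     (\<forall>A \<in> carrier_mat 4 4. \<forall>B \<in> carrier_mat 4 4. \<Lambda> (A + B) = \<Lambda> A + \<Lambda> B) \<and>
     (\<forall>A \<in> carrier_mat 4 4. \<forall>c::complex. \<Lambda> (c \<cdot>\<^sub>m A) = c \<cdot>\<^sub>m \<Lambda> A)"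

definition trace_preserving4 :: "(complex mat \<Rightarrow> complex mat) \<Rightarrow> bool" where
  "trace_preserving4 \<Lambda> \<longleftrightarrow> (\<forall>A \<in> carrier_mat 4 4. mtrace (\<Lambda> A) = mtrace A)"

text \<open>id_k \<otimes> \<Lambda>: apply \<Lambda> to each 4x4 block of a (4k)x(4k) matrix.\<close>
definition ampl :: "nat \<Rightarrow> (complex mat \<Rightarrow> complex mat) \<Rightarrow> complex mat \<Rightarrow> complex mat" where
  "ampl k \<Lambda> X = mat (4*k) (4*k) (\<lambda>(r,c).
      \<Lambda> (mat 4 4 (\<lambda>(i,j). X $$ (4*(r div 4) + i, 4*(c div 4) + j))) $$ (r mod 4, c mod 4))"

definition completely_positive4 :: "(complex mat \<Rightarrow> complex mat) \<Rightarrow> bool" where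
  "completely_positive4 \<Lambda> \<longleftrightarrow> (\<forall>k X. psd (4*k) X \<longrightarrow> psd (4*k) (ampl k \<Lambda> X))"

definition non_entangling :: "(complex mat \<Rightarrow> complex mat) \<Rightarrow> bool" where
  "non_entangling \<Lambda> \<longleftrightarrow> linear_map4 \<Lambda> \<and> completely_positive4 \<Lambda> \<and> trace_preserving4 \<Lambda>
     \<and> (\<forall>\<rho>. separable \<rho> \<longrightarrow> separable (\<Lambda> \<rho>))"

definition Phi1 :: "complex mat" where
  "Phi1 = outer 4 (vec 4 (\<lambda>i. if i = 0 \<or> i = 3 then complex_of_real (1 / sqrt 2) else 0))"

definition Phi2 :: "complex mat" where
  "Phi2 = outer 4 (vec 4 (\<lambda>i. if i = 0 then complex_of_real (1 / sqrt 2)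
                         else if i = 3 then - complex_of_real (1 / sqrt 2) else 0))"

definition ket01 :: "complex mat" where
  "ket01 = outer 4 (unit_vec 4 1)"

end

theory Submission
  imports Defs
begin


lemma CS_sum:
  fixes a b :: "nat \<Rightarrow> real"
  shows "(\<Sum>i\<in>I. a i * b i)\<^sup>2 \<le> (\<Sum>i\<in>I. (a i)\<^sup>2) * (\<Sum>i\<in>I. (b i)\<^sup>2)"
proof (cases "(\<Sum>i\<in>I. (b i)\<^sup>2) > 0")
  case False
  then consider "\<And>i. i\<in>I \<Longrightarrow> b i = 0" | "infinite I"
    by (metis (mono_tags, lifting) sum_pos2 zero_le_power2 zero_less_power2)
  thus ?thesis
    by fastforce
next
  case True
  define r where "r \<equiv> (\<Sum>i\<in>I. a i * b i) / (\<Sum>i\<in>I. (b i)\<^sup>2)"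
  have "0 \<le> (\<Sum>i\<in>I. (a i - r * b i)\<^sup>2)"
    by (simp add: sum_nonneg)
  also have "... = (\<Sum>i\<in>I. (a i)\<^sup>2) - 2 * r * (\<Sum>i\<in>I. a i * b i) + r\<^sup>2 * (\<Sum>i\<in>I. (b i)\<^sup>2)"
    by (simp add: algebra_simps power2_eq_square sum_distrib_left flip: sum.distrib)
  also have "\<dots> = (\<Sum>i\<in>I. (a i)\<^sup>2) - ((\<Sum>i\<in>I. a i * b i))\<^sup>2 / (\<Sum>i\<in>I. (b i)\<^sup>2)"
    by (simp add: r_def power2_eq_square)
  finally show ?thesis
    using True by (simp add: divide_simps)
qed

lemma kron_idx: "r < 4 \<Longrightarrow> c < 4 \<Longrightarrow>
  kron22 A B $$ (r,c) = A $$ (r div 2, c div 2) * B $$ (r mod 2, c mod 2)"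
  by (simp add: kron22_def)

lemma outer_idx: "i < n \<Longrightarrow> j < n \<Longrightarrow> outer n v $$ (i,j) = v $ i * cnj (v $ j)"
  by (simp add: outer_def)

lemma outer_carrier[simp]: "outer n v \<in> carrier_mat n n"
  by (simp add: outer_def)

lemma sep_props:
  assumes "separable X"
  shows "X \<in> carrier_mat 4 4"
    and "\<And>k. k < 4 \<Longrightarrow> Re (X $$ (k,k)) \<ge> 0"
    and "(cmod (X $$ (0,3)))\<^sup>2 \<le> Re (X $$ (1,1)) * Re (X $$ (2,2))"
proof -
  obtain n :: nat and p :: "nat \<Rightarrow> real" and \<phi> \<chi> where p: "\<forall>i<n. 0 \<le> p i" and
    X: "X = mat 4 4 (\<lambda>(r,c). \<Sum>i<n. complex_of_real (p i) *
              kron22 (outer 2 (\<phi> i)) (outer 2 (\<chi> i)) $$ (r,c))"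
    using assms unfolding separable_def by (elim exE conjE) (rule that, assumption+)
  show "X \<in> carrier_mat 4 4" using X by simp
  have ent: "X $$ (r,c) = (\<Sum>i<n. complex_of_real (p i) *
      ((\<phi> i $ (r div 2) * cnj (\<phi> i $ (c div 2))) * (\<chi> i $ (r mod 2) * cnj (\<chi> i $ (c mod 2)))))"
    if "r < 4" "c < 4" for r c
    using that by (simp add: X kron_idx outer_idx)
  have diag: "X $$ (k,k) = complex_of_real (\<Sum>i<n. p i * ((cmod (\<phi> i $ (k div 2)))\<^sup>2 * (cmod (\<chi> i $ (k mod 2)))\<^sup>2))"
    if "k < 4" for k
    using that by (simp add: ent flip: complex_norm_square)
  show "Re (X $$ (k,k)) \<ge> 0" if "k < 4" for k
    using that p by (auto simp add: diag intro!: sum_nonneg)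
  define a where "a i = sqrt (p i) * (cmod (\<phi> i $ 0) * cmod (\<chi> i $ 1))" for i
  define b where "b i = sqrt (p i) * (cmod (\<phi> i $ 1) * cmod (\<chi> i $ 0))" for i
  have "cmod (X $$ (0,3)) \<le> (\<Sum>i<n. cmod (complex_of_real (p i) *
      ((\<phi> i $ 0 * cnj (\<phi> i $ 1)) * (\<chi> i $ 0 * cnj (\<chi> i $ 1)))))"
    by (simp add: ent norm_sum del: norm_mult)
  also have "\<dots> = (\<Sum>i<n. a i * b i)"
    apply (rule sum.cong, simp)
    using p by (simp add: a_def b_def norm_mult abs_of_nonneg)
  finally have c1: "cmod (X $$ (0,3)) \<le> (\<Sum>i<n. a i * b i)" .
  have r1: "Re (X $$ (1,1)) = (\<Sum>i<n. (a i)\<^sup>2)"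
    using p by (simp add: diag a_def power_mult_distrib)
  have r2: "Re (X $$ (2,2)) = (\<Sum>i<n. (b i)\<^sup>2)"
    using p by (simp add: diag b_def power_mult_distrib mult.commute)
  have "(cmod (X $$ (0,3)))\<^sup>2 \<le> (\<Sum>i<n. a i * b i)\<^sup>2"
    using c1 by (simp add: power_mono)
  also have "\<dots> \<le> Re (X $$ (1,1)) * Re (X $$ (2,2))"
    unfolding r1 r2 by (rule CS_sum)
  finally show "(cmod (X $$ (0,3)))\<^sup>2 \<le> Re (X $$ (1,1)) * Re (X $$ (2,2))" .
qed

definition ket10 :: "complex mat" where
  "ket10 = outer 4 (unit_vec 4 2)"

lemma four_cases: "(i::nat) < 4 \<Longrightarrow> i = 0 \<or> i = 1 \<or> i = 2 \<or> i = 3"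
  by auto

lemma sq2: "complex_of_real (1 / sqrt 2) * complex_of_real (1 / sqrt 2) = 1/2"
proof -
  have "complex_of_real (1 / sqrt 2) * complex_of_real (1 / sqrt 2) = complex_of_real (1 / sqrt 2 * (1 / sqrt 2))"
    by (simp only: of_real_mult)
  also have "1 / sqrt 2 * (1 / sqrt 2) = (1/2::real)"
    by (simp add: field_simps)
  finally show ?thesis by simp
qed

lemma power4r: "(x::real)^4 = x*(x*(x*x))" by (simp add: eval_nat_numeral)

lemma sum4: "(\<Sum>k<4. f k) = f 0 + f 1 + f 2 + f (3::nat)"
  by (simp add: eval_nat_numeral)

lemma ipow: "\<i>^2 = -1" "\<i>^3 = -\<i>" "(-\<i>)^2 = -1" "(-\<i>)^3 = \<i>"
  by (simp_all add: eval_nat_numeral)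

lemma Phi1_idx: "i < 4 \<Longrightarrow> j < 4 \<Longrightarrow> Phi1 $$ (i,j) =
   (if (i = 0 \<or> i = 3) \<and> (j = 0 \<or> j = 3) then 1/2 else 0)"
  by (auto simp add: Phi1_def outer_idx sq2 simp del: of_real_divide)

lemma Phi2_idx: "i < 4 \<Longrightarrow> j < 4 \<Longrightarrow> Phi2 $$ (i,j) =
   (if (i = 0 \<or> i = 3) \<and> (j = 0 \<or> j = 3) then (if i = j then 1/2 else -1/2) else 0)"
  by (auto simp add: Phi2_def outer_idx sq2 simp del: of_real_divide)

lemma ket01_idx: "i < 4 \<Longrightarrow> j < 4 \<Longrightarrow> ket01 $$ (i,j) = (if i = 1 \<and> j = 1 then 1 else 0)"
  by (auto simp add: ket01_def outer_idx)

lemma ket10_idx: "i < 4 \<Longrightarrow> j < 4 \<Longrightarrow> ket10 $$ (i,j) = (if i = 2 \<and> j = 2 then 1 else 0)"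
  by (auto simp add: ket10_def outer_idx)

lemma Phi1_carrier[simp]: "Phi1 \<in> carrier_mat 4 4" by (simp add: Phi1_def)
lemma Phi2_carrier[simp]: "Phi2 \<in> carrier_mat 4 4" by (simp add: Phi2_def)
lemma ket01_carrier[simp]: "ket01 \<in> carrier_mat 4 4" by (simp add: ket01_def)
lemma ket10_carrier[simp]: "ket10 \<in> carrier_mat 4 4" by (simp add: ket10_def)
lemma dims[simp]: "dim_row Phi1 = 4" "dim_col Phi1 = 4" "dim_row Phi2 = 4" "dim_col Phi2 = 4"
  "dim_row ket01 = 4" "dim_col ket01 = 4" "dim_row ket10 = 4" "dim_col ket10 = 4"
  by (simp_all add: Phi1_def Phi2_def ket01_def ket10_def outer_def)

lemma sep_family:
  fixes p q :: real
  assumes pq: "p\<^sup>2 + q\<^sup>2 = 1"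
  shows "separable (complex_of_real (2 * p\<^sup>2 * q\<^sup>2) \<cdot>\<^sub>m Phi1 + complex_of_real (p^4) \<cdot>\<^sub>m ket01
            + complex_of_real (q^4) \<cdot>\<^sub>m ket10)"
proof -
  define \<phi> where "\<phi> k = vec 2 (\<lambda>j. if j = 0 then complex_of_real p else complex_of_real q * \<i>^k)" for k :: nat
  define \<chi> where "\<chi> k = vec 2 (\<lambda>j. if j = 0 then complex_of_real q else complex_of_real p * (-\<i>)^k)" for k :: nat
  have u: "unit_vec2 (\<phi> k) \<and> unit_vec2 (\<chi> k)" for k
    using pq by (simp add: unit_vec2_def \<phi>_def \<chi>_def norm_mult norm_power eval_nat_numeral add.commute)
  have eq: "complex_of_real (2 * p\<^sup>2 * q\<^sup>2) \<cdot>\<^sub>m Phi1 + complex_of_real (p^4) \<cdot>\<^sub>m ket01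
            + complex_of_real (q^4) \<cdot>\<^sub>m ket10 =
     mat 4 4 (\<lambda>(r,c). \<Sum>i<4. complex_of_real (1/4) *
              kron22 (outer 2 (\<phi> i)) (outer 2 (\<chi> i)) $$ (r,c))"
  proof (rule eq_matI)
    fix i j assume ij: "i < dim_row (mat 4 4 (\<lambda>(r,c). \<Sum>i<4. complex_of_real (1/4) *
              kron22 (outer 2 (\<phi> i)) (outer 2 (\<chi> i)) $$ (r,c)))"
       "j < dim_col (mat 4 4 (\<lambda>(r,c). \<Sum>i<4. complex_of_real (1/4) *
              kron22 (outer 2 (\<phi> i)) (outer 2 (\<chi> i)) $$ (r,c)))"
    hence i4: "i < 4" and j4: "j < 4" by auto
    show "(complex_of_real (2 * p\<^sup>2 * q\<^sup>2) \<cdot>\<^sub>m Phi1 + complex_of_real (p^4) \<cdot>\<^sub>m ket01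
            + complex_of_real (q^4) \<cdot>\<^sub>m ket10) $$ (i,j) = mat 4 4 (\<lambda>(r,c). \<Sum>i<4. complex_of_real (1/4) *
              kron22 (outer 2 (\<phi> i)) (outer 2 (\<chi> i)) $$ (r,c)) $$ (i,j)"
      using i4 j4 apply (simp add: Phi1_idx ket01_idx ket10_idx kron_idx sum4)
      using four_cases[OF i4] four_cases[OF j4]
      apply (elim disjE)
      apply (simp_all add: outer_idx \<phi>_def \<chi>_def ipow algebra_simps flip: of_real_mult of_real_power)
      by (simp_all add: power2_eq_square power4r)
  qed auto
  show ?thesis unfolding separable_def
    apply (rule exI[of _ 4], rule exI[of _ "\<lambda>_. 1/4"], rule exI[of _ \<phi>], rule exI[of _ \<chi>])
    using u eq by simp
qed



lemma sep_family_r: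
  fixes r :: real
  assumes "0 \<le> r" "r \<le> 1"
  shows "separable (complex_of_real (2 * (1 - r) * r) \<cdot>\<^sub>m Phi1 + complex_of_real ((1-r)\<^sup>2) \<cdot>\<^sub>m ket01
            + complex_of_real (r\<^sup>2) \<cdot>\<^sub>m ket10)"
proof -
  define p where "p = sqrt (1 - r)"
  define q where "q = sqrt r"
  have p2: "p\<^sup>2 = 1 - r" using assms by (simp add: p_def)
  have q2: "q\<^sup>2 = r" using assms by (simp add: q_def)
  have p4: "p^4 = (1-r)\<^sup>2" unfolding p2[symmetric] by (simp flip: power_mult)
  have q4: "q^4 = r\<^sup>2" unfolding q2[symmetric] by (simp flip: power_mult)
  have "p\<^sup>2 + q\<^sup>2 = 1" using p2 q2 by simp
  from sep_family[OF this] show ?thesis by (simp add: p2 q2 p4 q4)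
qed

lemma sep_ket01: "separable ket01"
proof -
  have "complex_of_real (2 * (1 - 0) * 0) \<cdot>\<^sub>m Phi1 + complex_of_real ((1-0)\<^sup>2) \<cdot>\<^sub>m ket01
            + complex_of_real (0\<^sup>2) \<cdot>\<^sub>m ket10 = ket01"
    by (rule eq_matI) auto
  with sep_family_r[of 0] show ?thesis by simp
qed

lemma sep_ket10: "separable ket10"
proof -
  have "complex_of_real (2 * (1 - 1) * 1) \<cdot>\<^sub>m Phi1 + complex_of_real ((1-1)\<^sup>2) \<cdot>\<^sub>m ket01
            + complex_of_real (1\<^sup>2) \<cdot>\<^sub>m ket10 = ket10"
    by (rule eq_matI) auto
  with sep_family_r[of 1] show ?thesis by simp
qed

lemma psd_outer: "psd n (outer n w)"
  unfolding psd_def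
proof (intro conjI allI impI ballI)
  show "outer n w \<in> carrier_mat n n" by simp
  fix i j assume "i < n" "j < n"
  then show "outer n w $$ (i, j) = cnj (outer n w $$ (j, i))" by (simp add: outer_idx)
next
  fix v :: "complex vec"
  define z where "z = (\<Sum>i<n. cnj (v $ i) * w $ i)"
  have "(\<Sum>i<n. \<Sum>j<n. cnj (v $ i) * outer n w $$ (i, j) * v $ j) = z * cnj z"
    unfolding z_def cnj_sum sum_product
    by (rule sum.cong, simp, rule sum.cong, simp, simp add: outer_idx)
  also have "\<dots> = complex_of_real ((cmod z)\<^sup>2)" by (rule complex_norm_square[symmetric])
  finally show "0 \<le> Re (\<Sum>i<n. \<Sum>j<n. cnj (v $ i) * outer n w $$ (i, j) * v $ j)" by simp
qed

lemma psd_Phi1: "psd 4 Phi1" unfolding Phi1_def by (rule psd_outer)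

lemma psd_diag: assumes "psd 4 A" "k < 4" shows "0 \<le> Re (A $$ (k,k))"
proof -
  have "0 \<le> Re (\<Sum>i<4. \<Sum>j<4. cnj (unit_vec 4 k $ i) * A $$ (i,j) * unit_vec 4 k $ j)"
  proof -
    have "\<forall>v\<in>carrier_vec 4. 0 \<le> Re (\<Sum>i<4. \<Sum>j<4. cnj (v $ i) * A $$ (i,j) * v $ j)"
      using assms(1) unfolding psd_def by blast
    moreover have "unit_vec 4 k \<in> carrier_vec 4" by simp
    ultimately show ?thesis by blast
  qed
  moreover have "(\<Sum>i<4. \<Sum>j<4. cnj (unit_vec 4 k $ i) * A $$ (i,j) * unit_vec 4 k $ j) = A $$ (k,k)"
  proof -
    have d: "(\<Sum>j<4. (if j = k then f j else 0)) = (f k :: complex)" for f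
      using assms(2) by simp
    have "(\<Sum>i<4. \<Sum>j<4. cnj (unit_vec 4 k $ i) * A $$ (i,j) * unit_vec 4 k $ j)
       = (\<Sum>i<4. if i = k then (\<Sum>j<4. if j = k then A $$ (i,j) else 0) else 0)"
    proof (rule sum.cong[OF refl])
      fix i assume "i \<in> {..<4::nat}"
      hence i4: "i < 4" by simp
      have "(\<Sum>j<4. cnj (unit_vec 4 k $ i) * A $$ (i,j) * unit_vec 4 k $ j)
         = (\<Sum>j<4. if i = k then (if j = k then A $$ (i,j) else 0) else 0)"
      proof (rule sum.cong[OF refl])
        fix j assume "j \<in> {..<4::nat}"
        hence j4: "j < 4" by simp
        show "cnj (unit_vec 4 k $ i) * A $$ (i,j) * unit_vec 4 k $ j
           = (if i = k then (if j = k then A $$ (i,j) else 0) else 0)"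
          using i4 j4 by (simp add: unit_vec_def)
      qed
      also have "\<dots> = (if i = k then (\<Sum>j<4. if j = k then A $$ (i,j) else 0) else 0)"
        by simp
      finally show "(\<Sum>j<4. cnj (unit_vec 4 k $ i) * A $$ (i,j) * unit_vec 4 k $ j)
         = (if i = k then (\<Sum>j<4. if j = k then A $$ (i,j) else 0) else 0)" .
    qed
    also have "\<dots> = A $$ (k,k)" by (simp only: d)
    finally show ?thesis .
  qed

  ultimately show ?thesis by simp
qed



lemma ne_pos:
  assumes "non_entangling \<Lambda>" "psd 4 A"
  shows "psd 4 (\<Lambda> A)"
proof -
  have lin: "linear_map4 \<Lambda>" and cp: "completely_positive4 \<Lambda>"
    using assms(1) by (auto simp: non_entangling_def)
  have Ac: "A \<in> carrier_mat 4 4" using assms(2) by (simp add: psd_def)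
  have LAc: "\<Lambda> A \<in> carrier_mat 4 4" using lin Ac by (simp add: linear_map4_def)
  have "\<forall>X. psd (4*1) X \<longrightarrow> psd (4*1) (ampl 1 \<Lambda> X)"
    using cp by (simp only: completely_positive4_def) blast
  hence "psd (4*1) (ampl 1 \<Lambda> A)" using assms(2) by (simp only: mult_1_right)
  moreover have "ampl 1 \<Lambda> A = \<Lambda> A"
  proof -
    have m: "mat 4 4 (\<lambda>(i,j). A $$ (4 * (r div 4) + i, 4 * (c div 4) + j)) = A" if "r < 4" "c < 4" for r c
      using that Ac by (intro eq_matI) auto
    have m0: "mat 4 4 (($$) A) = A" using Ac by (intro eq_matI) auto
    show ?thesis using LAc by (intro eq_matI) (auto simp: ampl_def m0)
  qed
  ultimately show ?thesis by (simp only: mult_1_right)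
qed

lemma lin3:
  assumes "linear_map4 \<Lambda>" "A \<in> carrier_mat 4 4" "B \<in> carrier_mat 4 4" "C \<in> carrier_mat 4 4"
  shows "\<Lambda> (a \<cdot>\<^sub>m A + b \<cdot>\<^sub>m B + c \<cdot>\<^sub>m C) = a \<cdot>\<^sub>m \<Lambda> A + b \<cdot>\<^sub>m \<Lambda> B + c \<cdot>\<^sub>m \<Lambda> C"
  using assms unfolding linear_map4_def by (simp add: add_carrier_mat)

lemma lin2:
  assumes "linear_map4 \<Lambda>" "A \<in> carrier_mat 4 4" "B \<in> carrier_mat 4 4"
  shows "\<Lambda> (a \<cdot>\<^sub>m A + b \<cdot>\<^sub>m B) = a \<cdot>\<^sub>m \<Lambda> A + b \<cdot>\<^sub>m \<Lambda> B"
  using assms unfolding linear_map4_def by (simp add: add_carrier_mat)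



theorem theorem4:
  fixes lam :: real
  assumes "1/2 < lam" and "lam < 1"
  shows "\<not> (\<exists>\<Lambda>. non_entangling \<Lambda> \<and>
           \<Lambda> (complex_of_real lam \<cdot>\<^sub>m Phi1 + complex_of_real (1 - lam) \<cdot>\<^sub>m ket01)
             = complex_of_real lam \<cdot>\<^sub>m Phi1 + complex_of_real (1 - lam) \<cdot>\<^sub>m Phi2)"
proof
  assume "\<exists>\<Lambda>. non_entangling \<Lambda> \<and>
           \<Lambda> (complex_of_real lam \<cdot>\<^sub>m Phi1 + complex_of_real (1 - lam) \<cdot>\<^sub>m ket01)
             = complex_of_real lam \<cdot>\<^sub>m Phi1 + complex_of_real (1 - lam) \<cdot>\<^sub>m Phi2"
  then obtain \<Lambda> where ne: "non_entangling \<Lambda>" and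
    eqn: "\<Lambda> (complex_of_real lam \<cdot>\<^sub>m Phi1 + complex_of_real (1 - lam) \<cdot>\<^sub>m ket01)
             = complex_of_real lam \<cdot>\<^sub>m Phi1 + complex_of_real (1 - lam) \<cdot>\<^sub>m Phi2" by blast
  have lin: "linear_map4 \<Lambda>" and tp: "trace_preserving4 \<Lambda>"
    and nes: "\<And>\<rho>. separable \<rho> \<Longrightarrow> separable (\<Lambda> \<rho>)"
    using ne by (auto simp: non_entangling_def)
  define E where "E = \<Lambda> Phi1"
  define D where "D = \<Lambda> ket01"
  define F where "F = \<Lambda> ket10"
  have Ec: "E \<in> carrier_mat 4 4" using lin by (simp add: linear_map4_def E_def)
  have Dc: "D \<in> carrier_mat 4 4" using lin by (simp add: linear_map4_def D_def)
  have Fc: "F \<in> carrier_mat 4 4" using lin by (simp add: linear_map4_def F_def)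
  have sepD: "separable D" unfolding D_def by (rule nes[OF sep_ket01])
  have sepF: "separable F" unfolding F_def by (rule nes[OF sep_ket10])
  have psdE: "psd 4 E" unfolding E_def by (rule ne_pos[OF ne psd_Phi1])
  have L: "complex_of_real lam \<cdot>\<^sub>m E + complex_of_real (1 - lam) \<cdot>\<^sub>m D
     = complex_of_real lam \<cdot>\<^sub>m Phi1 + complex_of_real (1 - lam) \<cdot>\<^sub>m Phi2"
    using eqn lin2[OF lin Phi1_carrier ket01_carrier] by (simp add: E_def D_def)
  have ent: "complex_of_real lam * E $$ (i,j) + complex_of_real (1 - lam) * D $$ (i,j)
     = complex_of_real lam * Phi1 $$ (i,j) + complex_of_real (1 - lam) * Phi2 $$ (i,j)"
    if "i < 4" "j < 4" for i j
    using arg_cong[OF L, of "\<lambda>M. M $$ (i,j)"] that Ec Dc by simp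
  have e11: "lam * Re (E $$ (1,1)) + (1 - lam) * Re (D $$ (1,1)) = 0"
    using arg_cong[OF ent[of 1 1], of Re] by (simp add: Phi1_idx Phi2_idx)
  have e22: "lam * Re (E $$ (2,2)) + (1 - lam) * Re (D $$ (2,2)) = 0"
    using arg_cong[OF ent[of 2 2], of Re] by (simp add: Phi1_idx Phi2_idx)
  have e03: "complex_of_real lam * E $$ (0,3) + complex_of_real (1 - lam) * D $$ (0,3)
     = complex_of_real ((2*lam - 1)/2)"
  proof -
    have "complex_of_real lam * E $$ (0,3) + complex_of_real (1 - lam) * D $$ (0,3)
       = complex_of_real lam * (1/2) + complex_of_real (1 - lam) * (-1/2)"
      using ent[of 0 3] by (simp add: Phi1_idx Phi2_idx)
    also have "\<dots> = complex_of_real (lam * (1/2) + (1 - lam) * (-1/2))" by simp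
    also have "lam * (1/2) + (1 - lam) * (-1/2) = (2*lam - 1)/2" by (simp add: field_simps)
    finally show ?thesis .
  qed
  have lp: "0 < lam" "0 < 1 - lam" using assms by auto
  have E11: "0 \<le> Re (E $$ (1,1))" "0 \<le> Re (E $$ (2,2))" using psd_diag[OF psdE] by auto
  have D11: "0 \<le> Re (D $$ (1,1))" "0 \<le> Re (D $$ (2,2))" using sep_props(2)[OF sepD] by auto
  have rE11: "Re (E $$ (1,1)) = 0" and rD11: "Re (D $$ (1,1)) = 0"
  proof -
    have "0 \<le> lam * Re (E $$ (1,1))" "0 \<le> (1 - lam) * Re (D $$ (1,1))"
      using lp E11 D11 by auto
    hence "lam * Re (E $$ (1,1)) = 0" "(1 - lam) * Re (D $$ (1,1)) = 0" using e11 by linarith+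
    thus "Re (E $$ (1,1)) = 0" "Re (D $$ (1,1)) = 0" using lp by auto
  qed
  have rE22: "Re (E $$ (2,2)) = 0" and rD22: "Re (D $$ (2,2)) = 0"
  proof -
    have "0 \<le> lam * Re (E $$ (2,2))" "0 \<le> (1 - lam) * Re (D $$ (2,2))"
      using lp E11 D11 by auto
    hence "lam * Re (E $$ (2,2)) = 0" "(1 - lam) * Re (D $$ (2,2)) = 0" using e22 by linarith+
    thus "Re (E $$ (2,2)) = 0" "Re (D $$ (2,2)) = 0" using lp by auto
  qed
  have D03: "D $$ (0,3) = 0"
    using sep_props(3)[OF sepD] rD11 by simp
  have E03: "E $$ (0,3) = complex_of_real ((2*lam - 1)/(2*lam))"
  proof -
    have "complex_of_real lam * E $$ (0,3) = complex_of_real ((2*lam - 1)/2)" using e03 D03 by simp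
    hence "E $$ (0,3) = complex_of_real ((2*lam - 1)/2) / complex_of_real lam"
      using lp by (simp add: field_simps)
    thus ?thesis by simp
  qed
  define u where "u = Re (F $$ (1,1))"
  define w where "w = Re (F $$ (2,2))"
  define m where "m = cmod (F $$ (0,3))"
  have u0: "0 \<le> u" and w0: "0 \<le> w" using sep_props(2)[OF sepF] by (auto simp: u_def w_def)
  have muw: "m\<^sup>2 \<le> u * w" using sep_props(3)[OF sepF] by (simp add: u_def w_def m_def)
  have "mtrace F = 1"
  proof -
    have "mtrace F = mtrace ket10" using tp unfolding trace_preserving4_def F_def by simp
    also have "\<dots> = 1" by (simp add: mtrace_def sum4 ket10_idx)
    finally show ?thesis .
  qed
  hence "F $$ (0,0) + F $$ (1,1) + F $$ (2,2) + F $$ (3,3) = 1"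
    using Fc by (simp add: mtrace_def sum4)
  hence "Re (F $$ (0,0)) + u + w + Re (F $$ (3,3)) = 1"
    unfolding u_def w_def by (metis one_complex.sel(1) plus_complex.sel(1))
  moreover have "0 \<le> Re (F $$ (0,0))" "0 \<le> Re (F $$ (3,3))" using sep_props(2)[OF sepF] by auto
  ultimately have uw1: "u + w \<le> 1" by linarith
  have uw: "u * w \<le> 1/4"
  proof -
    have "4 * (u * w) \<le> (u + w)\<^sup>2" using sum_squares_ge_zero[of "u - w" 0]
      by (simp add: power2_eq_square algebra_simps)
    also have "\<dots> \<le> 1" using uw1 u0 w0 by (simp add: power_le_one)
    finally show ?thesis by simp
  qed
  have "m\<^sup>2 \<le> (1/2)\<^sup>2" using muw uw by (simp add: power2_eq_square)
  hence m2: "m \<le> 1/2" by (rule power2_le_imp_le) simp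
  define r where "r = (2*lam - 1)/(4*lam)"
  have r0: "0 < r" and r1: "r < 1/4" using assms by (auto simp: r_def field_simps)
  define a where "a = 2 * (1 - r) * r"
  define b where "b = (1 - r)\<^sup>2"
  define c where "c = r\<^sup>2"
  have c0: "0 < c" using r0 by (simp add: c_def)
  define S where "S = complex_of_real a \<cdot>\<^sub>m Phi1 + complex_of_real b \<cdot>\<^sub>m ket01
            + complex_of_real c \<cdot>\<^sub>m ket10"
  have sepS: "separable S" unfolding S_def a_def b_def c_def
    using sep_family_r[of r] r0 r1 by simp
  define X where "X = \<Lambda> S"
  have sepX: "separable X" unfolding X_def by (rule nes[OF sepS])
  have X: "X = complex_of_real a \<cdot>\<^sub>m E + complex_of_real b \<cdot>\<^sub>m D + complex_of_real c \<cdot>\<^sub>m F"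
    unfolding X_def S_def E_def D_def F_def by (rule lin3[OF lin]) simp_all
  have Xe: "X $$ (i,j) = complex_of_real a * E $$ (i,j) + complex_of_real b * D $$ (i,j)
      + complex_of_real c * F $$ (i,j)" if "i < 4" "j < 4" for i j
    using that Ec Dc Fc by (simp add: X)
  have X11: "Re (X $$ (1,1)) = c * u" using Xe[of 1 1] rE11 rD11 by (simp add: u_def)
  have X22: "Re (X $$ (2,2)) = c * w" using Xe[of 2 2] rE22 rD22 by (simp add: w_def)
  define A where "A = a * ((2*lam - 1)/(2*lam))"
  have X03: "X $$ (0,3) = complex_of_real A + complex_of_real c * F $$ (0,3)"
    using Xe[of 0 3] E03 D03 by (simp add: A_def)
  have A3: "A = 4 * (1 - r) * c"
  proof -
    have "(2*lam - 1)/(2*lam) = 2 * r" using lp by (simp add: r_def field_simps)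
    thus ?thesis by (simp add: A_def a_def c_def power2_eq_square)
  qed
  have A3c: "3 * c \<le> A"
  proof -
    have "3 \<le> 4 * (1 - r)" using r1 by simp
    hence "3 * c \<le> 4 * (1 - r) * c" using c0 by (intro mult_right_mono) auto
    thus ?thesis using A3 by simp
  qed
  have "A - c * m \<le> cmod (X $$ (0,3))"
  proof -
    have "cmod (complex_of_real A) - cmod (complex_of_real c * F $$ (0,3)) \<le> cmod (X $$ (0,3))"
      unfolding X03 by (rule norm_diff_ineq)
    moreover have "cmod (complex_of_real A) = A" using A3c c0 by simp
    moreover have "cmod (complex_of_real c * F $$ (0,3)) = c * m" using c0 by (simp add: m_def norm_mult)
    ultimately show ?thesis by simp
  qed
  moreover have "5/2 * c \<le> A - c * m"
  proof -
    have "c * m \<le> c * (1/2)" using m2 c0 by (intro mult_left_mono) auto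
    thus ?thesis using A3c by simp
  qed
  ultimately have lo: "5/2 * c \<le> cmod (X $$ (0,3))" by linarith
  have "(5/2 * c)\<^sup>2 \<le> (cmod (X $$ (0,3)))\<^sup>2" using lo c0 by (intro power_mono) auto
  also have "\<dots> \<le> (c * u) * (c * w)" using sep_props(3)[OF sepX] X11 X22 by simp
  also have "\<dots> = c\<^sup>2 * (u * w)" by (simp add: power2_eq_square algebra_simps)
  also have "\<dots> \<le> c\<^sup>2 * (1/4)" using uw by (intro mult_left_mono) auto
  finally have "(5/2 * c)\<^sup>2 \<le> c\<^sup>2 * (1/4)" .
  thus False using c0 by (simp add: power2_eq_square)
qed

end
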